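(* Let $|\psi\rangle$ be a pure three-qubit state. If $\mathcal C_{ij}^2>\frac49$ holds for two distinct pairs $\{i,j\}\subset\{A,B,C\}$, then steering is non-monogamous for $|\psi\rangle$: the corresponding two reduced states both satisfy $S_{ij}>1$, i.e. both violate the three-settings CJWR linear steering inequality.
   Context: For a two-qubit state $\rho$ let $t_{kl}=\mathrm{Tr}[\rho\,\sigma_k\otimes\sigma_l]$ ($\sigma_k$ Pauli matrices) and $S(\rho)=\sum_{k,l=1}^3 t_{kl}^2$; $\rho_{ij}$ is the reduced state of qubits $i,j$ and $S_{ij}=S(\rho_{ij})$. The three-settings CJWR linear steering inequality has maximal value $\sqrt{S(\rho)}$ over settings, so it is violated iff $S(\rho)>1$. $\mathcal C_{ij}$ is the Wootters concurrence of $\rho_{ij}$: $\mathcal C(\rho)=\max\{0,\lambda_1-\lambda_2-\lambda_3-\lambda_4\}$, with $\lambda_1\ge\dots\ge\lambda_4$ the square roots of the eigenvalues of $\rho(\sigma_2\otimes\sigma_2)\rho^*(\sigma_2\otimes\sigma_2)$. *)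

theory Defs
  imports "Jordan_Normal_Form.Char_Poly" "HOL-Computational_Algebra.Polynomial"
begin

text \<open>Qubit basis index 0 or 1. A pure three-qubit state is a map
  psi a b c (a,b,c in {0,1}; qubits A,B,C), normalised.\<close>

definition normalized3 :: "(nat \<Rightarrow> nat \<Rightarrow> nat \<Rightarrow> complex) \<Rightarrow> bool" where
  "normalized3 psi \<longleftrightarrow>
     (\<Sum>a<2. \<Sum>b<2. \<Sum>c<2. (cmod (psi a b c))^2) = 1"

definition pauli :: "nat \<Rightarrow> complex mat" where
  "pauli k = (if k = 1 then mat_of_rows_list 2 [[0, 1], [1, 0]]
              else if k = 2 then mat_of_rows_list 2 [[0, -\<i>], [\<i>, 0]]
              else mat_of_rows_list 2 [[1, 0], [0, -1]])"

text \<open>Kronecker product of two 2x2 matrices; basis index 2*x+y.\<close>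
definition kron2 :: "complex mat \<Rightarrow> complex mat \<Rightarrow> complex mat" where
  "kron2 P Q = mat 4 4 (\<lambda>(i, j). P $$ (i div 2, j div 2) * Q $$ (i mod 2, j mod 2))"

text \<open>Two-qubit reduced states of |psi><psi|, qubits in the order of the pair.\<close>
definition rho_AB :: "(nat \<Rightarrow> nat \<Rightarrow> nat \<Rightarrow> complex) \<Rightarrow> complex mat" where
  "rho_AB psi = mat 4 4 (\<lambda>(i, j).
     \<Sum>c<2. psi (i div 2) (i mod 2) c * cnj (psi (j div 2) (j mod 2) c))"

definition rho_AC :: "(nat \<Rightarrow> nat \<Rightarrow> nat \<Rightarrow> complex) \<Rightarrow> complex mat" where
  "rho_AC psi = mat 4 4 (\<lambda>(i, j).
     \<Sum>b<2. psi (i div 2) b (i mod 2) * cnj (psi (j div 2) b (j mod 2)))"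

definition rho_BC :: "(nat \<Rightarrow> nat \<Rightarrow> nat \<Rightarrow> complex) \<Rightarrow> complex mat" where
  "rho_BC psi = mat 4 4 (\<lambda>(i, j).
     \<Sum>a<2. psi a (i div 2) (i mod 2) * cnj (psi a (j div 2) (j mod 2)))"

definition mtrace :: "complex mat \<Rightarrow> complex" where
  "mtrace A = (\<Sum>i<dim_row A. A $$ (i, i))"

definition corr :: "complex mat \<Rightarrow> nat \<Rightarrow> nat \<Rightarrow> real" where
  "corr \<rho> k l = Re (mtrace (\<rho> * kron2 (pauli k) (pauli l)))"

definition S_val :: "complex mat \<Rightarrow> real" where
  "S_val \<rho> = (\<Sum>k\<in>{1..3}. \<Sum>l\<in>{1..3}. (corr \<rho> k l)^2)"

text \<open>The eigenvalues (with multiplicity) of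
  R = rho (sigma_2 x sigma_2) rho^* (sigma_2 x sigma_2) are the roots of its
  characteristic polynomial; they are real and non-negative for a density
  matrix, lambda_i are their square roots in decreasing order.\<close>
definition wootters_R :: "complex mat \<Rightarrow> complex mat" where
  "wootters_R \<rho> = (let Y = kron2 (pauli 2) (pauli 2) in
      \<rho> * Y * map_mat cnj \<rho> * Y)"

definition wootters_lambdas :: "complex mat \<Rightarrow> real list" where
  "wootters_lambdas \<rho> =
     rev (sorted_list_of_multiset
       (image_mset (\<lambda>z. sqrt (Re z)) (proots (char_poly (wootters_R \<rho>)))))"

definition concurrence :: "complex mat \<Rightarrow> real" where
  "concurrence \<rho> = (let l = wootters_lambdas \<rho> in
      max 0 (l ! 0 - l ! 1 - l ! 2 - l ! 3))"

end

theory Submission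
  imports Defs
begin


lemma mat_delete_mat:
  "mat_delete (mat (Suc n) (Suc n) f) i j =
   mat n n (\<lambda>(r,c). f (if r < i then r else Suc r, if c < j then c else Suc c))"
  by (rule eq_matI, auto simp: mat_delete_def)

lemma det_mat_Suc:
  "det (mat (Suc n) (Suc n) f) =
   (\<Sum>i<Suc n. f (i,0) * ((-1)^i * det (mat n n (\<lambda>(r,c). f (if r < i then r else Suc r, Suc c)))))"
proof -
  have "det (mat (Suc n) (Suc n) f) = (\<Sum>i<Suc n. mat (Suc n) (Suc n) f $$ (i,0) * cofactor (mat (Suc n) (Suc n) f) i 0)"
    by (rule laplace_expansion_column, auto)
  also have "\<dots> = (\<Sum>i<Suc n. f (i,0) * ((-1)^i * det (mat n n (\<lambda>(r,c). f (if r < i then r else Suc r, Suc c)))))"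
    by (rule sum.cong, auto simp: cofactor_def mat_delete_mat)
  finally show ?thesis .
qed

lemma det_mat_0: "det (mat 0 0 f) = 1" by (rule det_dim_zero, auto)

lemma det_mat_4: "det (mat 4 4 f) =
  f(0,0) * (f(1,1)*(f(2,2)*f(3,3) - f(3,2)*f(2,3)) - f(2,1)*(f(1,2)*f(3,3) - f(3,2)*f(1,3)) + f(3,1)*(f(1,2)*f(2,3) - f(2,2)*f(1,3)))
 - f(1,0) * (f(0,1)*(f(2,2)*f(3,3) - f(3,2)*f(2,3)) - f(2,1)*(f(0,2)*f(3,3) - f(3,2)*f(0,3)) + f(3,1)*(f(0,2)*f(2,3) - f(2,2)*f(0,3)))
 + f(2,0) * (f(0,1)*(f(1,2)*f(3,3) - f(3,2)*f(1,3)) - f(1,1)*(f(0,2)*f(3,3) - f(3,2)*f(0,3)) + f(3,1)*(f(0,2)*f(1,3) - f(1,2)*f(0,3)))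
 - f(3,0) * (f(0,1)*(f(1,2)*f(2,3) - f(2,2)*f(1,3)) - f(1,1)*(f(0,2)*f(2,3) - f(2,2)*f(0,3)) + f(2,1)*(f(0,2)*f(1,3) - f(1,2)*f(0,3)))"
  by (simp add: numeral_eq_Suc det_mat_Suc det_mat_0 lessThan_Suc algebra_simps)



lemma sum2: "(\<Sum>c<2. f c) = f 0 + f (1::nat)" by (simp add: numeral_eq_Suc)
lemma sum4: "(\<Sum>c<4. f c) = f 0 + f 1 + f 2 + f (3::nat)" by (simp add: numeral_eq_Suc)

lemma det_low_rank:
  fixes m b :: "nat \<Rightarrow> nat \<Rightarrow> complex"
  shows "det (mat 4 4 (\<lambda>(i,j). (if i = j then z else 0) - (\<Sum>c<2. m i c * b c j))) =
    z^2 * (z^2 - (\<Sum>c<2. \<Sum>j<4. b c j * m j c) * z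
       + ((\<Sum>j<4. b 0 j * m j 0) * (\<Sum>j<4. b 1 j * m j 1) - (\<Sum>j<4. b 0 j * m j 1) * (\<Sum>j<4. b 1 j * m j 0)))"
  unfolding det_mat_4 sum2 sum4 by (simp add: algebra_simps power2_eq_square power4_eq_xxxx)



definition yv :: "nat \<Rightarrow> nat \<Rightarrow> complex" where
  "yv i j = (if i + j = 3 then (if i = 1 \<or> i = 2 then 1 else -1) else 0)"

lemma Y_eq: "kron2 (pauli 2) (pauli 2) = mat 4 4 (\<lambda>(i,j). yv i j)"
proof (rule eq_matI)
  fix i j assume "i < dim_row (mat 4 4 (\<lambda>(i,j). yv i j))" "j < dim_col (mat 4 4 (\<lambda>(i,j). yv i j))"
  then have "i < 4" "j < 4" by auto
  then have "i = 0 \<or> i = 1 \<or> i = 2 \<or> i = 3" "j = 0 \<or> j = 1 \<or> j = 2 \<or> j = 3" by auto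
  then show "kron2 (pauli 2) (pauli 2) $$ (i, j) = mat 4 4 (\<lambda>(i,j). yv i j) $$ (i, j)"
    unfolding kron2_def yv_def pauli_def
    by (elim disjE; simp add: mat_of_rows_list_def)
qed (auto simp: kron2_def)

lemma mult_mat4: "mat 4 4 f * mat 4 4 g = mat 4 4 (\<lambda>(i,j). \<Sum>k<4. f (i,k) * g (k,j))"
  by (rule eq_matI, auto simp: scalar_prod_def atLeast0LessThan)

lemma cnj_mat4: "map_mat cnj (mat 4 4 f) = mat 4 4 (\<lambda>ij. cnj (f ij))"
  by (rule eq_matI, auto)

definition rhoM :: "(nat \<Rightarrow> nat \<Rightarrow> complex) \<Rightarrow> complex mat" where
  "rhoM M = mat 4 4 (\<lambda>(i,j). \<Sum>c<2. M i c * cnj (M j c))"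

definition KM :: "(nat \<Rightarrow> nat \<Rightarrow> complex) \<Rightarrow> nat \<Rightarrow> nat \<Rightarrow> complex" where
  "KM M c d = (\<Sum>i<4. \<Sum>j<4. M i c * yv i j * M j d)"

definition YM :: "(nat \<Rightarrow> nat \<Rightarrow> complex) \<Rightarrow> nat \<Rightarrow> nat \<Rightarrow> complex" where
  "YM M c j = (\<Sum>k<4. M k c * yv k j)"

definition BM :: "(nat \<Rightarrow> nat \<Rightarrow> complex) \<Rightarrow> nat \<Rightarrow> nat \<Rightarrow> complex" where
  "BM M c j = (\<Sum>c'<2. cnj (KM M c c') * YM M c' j)"

lemma R_eq: "wootters_R (rhoM M) = mat 4 4 (\<lambda>(i,j). \<Sum>c<2. M i c * BM M c j)"
proof -
  have "wootters_R (rhoM M) = mat 4 4 (\<lambda>(i,j). \<Sum>k<4. (\<Sum>k'<4. (\<Sum>k''<4.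
      (\<Sum>c<2. M i c * cnj (M k'' c)) * yv k'' k') * cnj (\<Sum>c<2. M k' c * cnj (M k c))) * yv k j)"
    unfolding wootters_R_def Let_def Y_eq rhoM_def mult_mat4 cnj_mat4 by simp
  also have "\<dots> = mat 4 4 (\<lambda>(i,j). \<Sum>c<2. M i c * BM M c j)"
    by (rule eq_matI, auto simp add: BM_def KM_def YM_def sum2 sum4 yv_def algebra_simps)
  finally show ?thesis .
qed



lemma charpoly_eval4: fixes A :: "complex mat" assumes "A \<in> carrier_mat 4 4"
  shows "poly (char_poly A) z = det (mat 4 4 (\<lambda>(i,j). (if i = j then z else 0) - A $$ (i,j)))"
proof -
  have "poly (char_poly A) z = det (- (char_matrix A z))" by (rule char_poly_matrix[OF assms])
  also have "- (char_matrix A z) = mat 4 4 (\<lambda>(i,j). (if i = j then z else 0) - A $$ (i,j))"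
    using assms by (intro eq_matI, auto simp: char_matrix_def)
  finally show ?thesis .
qed

lemma KM_sym: "KM M c d = KM M d c"
  unfolding KM_def sum4 yv_def by (simp add: algebra_simps)

lemma BM_M: "(\<Sum>j<4. BM M c j * M j d) = (\<Sum>c'<2. cnj (KM M c c') * KM M c' d)"
  unfolding BM_def YM_def KM_def sum2 sum4 by (simp add: algebra_simps)

definition sK :: "(nat \<Rightarrow> nat \<Rightarrow> complex) \<Rightarrow> real" where
  "sK M = (\<Sum>c<2. \<Sum>d<2. (cmod (KM M c d))^2)"

definition dK :: "(nat \<Rightarrow> nat \<Rightarrow> complex) \<Rightarrow> complex" where
  "dK M = KM M 0 0 * KM M 1 1 - KM M 0 1 * KM M 1 0"

lemma cmod_sq: "complex_of_real ((cmod z)^2) = z * cnj z"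
  by (rule complex_norm_square)

lemma charpoly_rhoM:
  "poly (char_poly (wootters_R (rhoM M))) z =
     z^2 * (z^2 - complex_of_real (sK M) * z + complex_of_real ((cmod (dK M))^2))"
proof -
  have "poly (char_poly (wootters_R (rhoM M))) z =
     det (mat 4 4 (\<lambda>(i,j). (if i = j then z else 0) - (\<Sum>c<2. M i c * BM M c j)))"
    by (subst charpoly_eval4, simp add: R_eq, rule arg_cong[of _ _ det], rule eq_matI, auto simp: R_eq)
  also have "\<dots> = z^2 * (z^2 - (\<Sum>c<2. \<Sum>j<4. BM M c j * M j c) * z
       + ((\<Sum>j<4. BM M 0 j * M j 0) * (\<Sum>j<4. BM M 1 j * M j 1) - (\<Sum>j<4. BM M 0 j * M j 1) * (\<Sum>j<4. BM M 1 j * M j 0)))"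
    by (rule det_low_rank)
  also have "\<dots> = z^2 * (z^2 - complex_of_real (sK M) * z + complex_of_real ((cmod (dK M))^2))"
    unfolding BM_M sK_def dK_def cmod_sq of_real_sum
    using KM_sym[of M 0 1]
    by (simp add: sum2 algebra_simps)
  finally show ?thesis .
qed



definition MAB :: "(nat \<Rightarrow> nat \<Rightarrow> nat \<Rightarrow> complex) \<Rightarrow> nat \<Rightarrow> nat \<Rightarrow> complex" where
  "MAB psi i c = psi (i div 2) (i mod 2) c"
definition MAC :: "(nat \<Rightarrow> nat \<Rightarrow> nat \<Rightarrow> complex) \<Rightarrow> nat \<Rightarrow> nat \<Rightarrow> complex" where
  "MAC psi i c = psi (i div 2) c (i mod 2)"
definition MBC :: "(nat \<Rightarrow> nat \<Rightarrow> nat \<Rightarrow> complex) \<Rightarrow> nat \<Rightarrow> nat \<Rightarrow> complex" where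
  "MBC psi i c = psi c (i div 2) (i mod 2)"

definition Uf :: "complex \<Rightarrow> complex \<Rightarrow> nat \<Rightarrow> nat \<Rightarrow> complex" where
  "Uf a b i j = (if i = 0 then (if j = 0 then a else b) else (if j = 0 then - cnj b else cnj a))"

definition uA :: "complex \<Rightarrow> complex \<Rightarrow> (nat \<Rightarrow> nat \<Rightarrow> nat \<Rightarrow> complex) \<Rightarrow> nat \<Rightarrow> nat \<Rightarrow> nat \<Rightarrow> complex" where
  "uA a b psi = (\<lambda>x y z. \<Sum>x'<2. Uf a b x x' * psi x' y z)"
definition uB :: "complex \<Rightarrow> complex \<Rightarrow> (nat \<Rightarrow> nat \<Rightarrow> nat \<Rightarrow> complex) \<Rightarrow> nat \<Rightarrow> nat \<Rightarrow> nat \<Rightarrow> complex" where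
  "uB a b psi = (\<lambda>x y z. \<Sum>y'<2. Uf a b y y' * psi x y' z)"
definition uC :: "complex \<Rightarrow> complex \<Rightarrow> (nat \<Rightarrow> nat \<Rightarrow> nat \<Rightarrow> complex) \<Rightarrow> nat \<Rightarrow> nat \<Rightarrow> nat \<Rightarrow> complex" where
  "uC a b psi = (\<lambda>x y z. \<Sum>z'<2. Uf a b z z' * psi x y z')"

definition ssum :: "(nat \<Rightarrow> nat \<Rightarrow> complex) \<Rightarrow> real" where
  "ssum K = (\<Sum>c<2. \<Sum>d<2. (cmod (K c d))^2)"
definition ddet :: "(nat \<Rightarrow> nat \<Rightarrow> complex) \<Rightarrow> complex" where
  "ddet K = K 0 0 * K 1 1 - K 0 1 * K 1 0"
definition rot :: "complex \<Rightarrow> complex \<Rightarrow> (nat \<Rightarrow> nat \<Rightarrow> complex) \<Rightarrow> nat \<Rightarrow> nat \<Rightarrow> complex" where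
  "rot a b K = (\<lambda>c d. \<Sum>e<2. \<Sum>f<2. Uf a b c e * Uf a b d f * K e f)"

definition Nn :: "(nat \<Rightarrow> nat \<Rightarrow> nat \<Rightarrow> complex) \<Rightarrow> real" where
  "Nn psi = (\<Sum>a<2. \<Sum>b<2. \<Sum>c<2. (cmod (psi a b c))^2)"

lemma ssum_scale: "ssum (\<lambda>c d. w * K c d) = (cmod w)^2 * ssum K"
  unfolding ssum_def sum2 by (simp add: norm_mult power_mult_distrib algebra_simps)

lemma ddet_scale: "ddet (\<lambda>c d. w * K c d) = w^2 * ddet K"
  unfolding ddet_def by (simp add: algebra_simps power2_eq_square)

lemma ssum_rot: "ssum (rot a b K) = ((cmod a)^2 + (cmod b)^2)^2 * ssum K"
  unfolding ssum_def rot_def sum2 Uf_def cmod_power2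
  by (simp add: algebra_simps power2_eq_square)

lemma ddet_rot: "ddet (rot a b K) = (a * cnj a + b * cnj b)^2 * ddet K"
  unfolding ddet_def rot_def sum2 Uf_def
  by (simp add: algebra_simps power2_eq_square)

lemma Nn_uA: "Nn (uA a b psi) = ((cmod a)^2 + (cmod b)^2) * Nn psi"
  unfolding Nn_def uA_def sum2 Uf_def cmod_power2
  by (simp add: algebra_simps power2_eq_square)
lemma Nn_uB: "Nn (uB a b psi) = ((cmod a)^2 + (cmod b)^2) * Nn psi"
  unfolding Nn_def uB_def sum2 Uf_def cmod_power2
  by (simp add: algebra_simps power2_eq_square)
lemma Nn_uC: "Nn (uC a b psi) = ((cmod a)^2 + (cmod b)^2) * Nn psi"
  unfolding Nn_def uC_def sum2 Uf_def cmod_power2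
  by (simp add: algebra_simps power2_eq_square)

lemma K_AB_uA: "KM (MAB (uA a b psi)) = (\<lambda>c d. (a * cnj a + b * cnj b) * KM (MAB psi) c d)"
  unfolding KM_def MAB_def uA_def sum2 sum4 Uf_def yv_def
  by (rule ext, rule ext, simp add: algebra_simps)
lemma K_AC_uA: "KM (MAC (uA a b psi)) = (\<lambda>c d. (a * cnj a + b * cnj b) * KM (MAC psi) c d)"
  unfolding KM_def MAC_def uA_def sum2 sum4 Uf_def yv_def
  by (rule ext, rule ext, simp add: algebra_simps)
lemma K_BC_uA: "KM (MBC (uA a b psi)) = rot a b (KM (MBC psi))"
  unfolding KM_def MBC_def uA_def rot_def sum2 sum4 yv_def
  by (rule ext, rule ext, simp add: algebra_simps)

lemma K_AB_uB: "KM (MAB (uB a b psi)) = (\<lambda>c d. (a * cnj a + b * cnj b) * KM (MAB psi) c d)"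
  unfolding KM_def MAB_def uB_def sum2 sum4 Uf_def yv_def
  by (rule ext, rule ext, simp add: algebra_simps)
lemma K_AC_uB: "KM (MAC (uB a b psi)) = rot a b (KM (MAC psi))"
  unfolding KM_def MAC_def uB_def rot_def sum2 sum4 yv_def
  by (rule ext, rule ext, simp add: algebra_simps)
lemma K_BC_uB: "KM (MBC (uB a b psi)) = (\<lambda>c d. (a * cnj a + b * cnj b) * KM (MBC psi) c d)"
  unfolding KM_def MBC_def uB_def sum2 sum4 Uf_def yv_def
  by (rule ext, rule ext, simp add: algebra_simps)

lemma K_AB_uC: "KM (MAB (uC a b psi)) = rot a b (KM (MAB psi))"
  unfolding KM_def MAB_def uC_def rot_def sum2 sum4 yv_def
  by (rule ext, rule ext, simp add: algebra_simps)
lemma K_AC_uC: "KM (MAC (uC a b psi)) = (\<lambda>c d. (a * cnj a + b * cnj b) * KM (MAC psi) c d)"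
  unfolding KM_def MAC_def uC_def sum2 sum4 Uf_def yv_def
  by (rule ext, rule ext, simp add: algebra_simps)
lemma K_BC_uC: "KM (MBC (uC a b psi)) = (\<lambda>c d. (a * cnj a + b * cnj b) * KM (MBC psi) c d)"
  unfolding KM_def MBC_def uC_def sum2 sum4 Uf_def yv_def
  by (rule ext, rule ext, simp add: algebra_simps)



definition G :: "(nat \<Rightarrow> nat \<Rightarrow> nat \<Rightarrow> complex) \<Rightarrow> real" where
  "G psi = ssum (KM (MAB psi)) + ssum (KM (MAC psi)) + ssum (KM (MBC psi)) - 6 * cmod (ddet (KM (MAB psi)))"

lemma w1_complex: assumes "(cmod a)^2 + (cmod b)^2 = 1" shows "a * cnj a + b * cnj b = 1"
proof -
  have "complex_of_real ((cmod a)^2 + (cmod b)^2) = a * cnj a + b * cnj b"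
    unfolding of_real_add complex_norm_square ..
  then show ?thesis using assms by simp
qed

lemma G_uA: assumes "(cmod a)^2 + (cmod b)^2 = 1" shows "G (uA a b psi) = G psi"
  using w1_complex[OF assms] assms
  unfolding G_def K_AB_uA K_AC_uA K_BC_uA by (simp add: ssum_scale ddet_scale ssum_rot)
lemma G_uB: assumes "(cmod a)^2 + (cmod b)^2 = 1" shows "G (uB a b psi) = G psi"
  using w1_complex[OF assms] assms
  unfolding G_def K_AB_uB K_AC_uB K_BC_uB by (simp add: ssum_scale ddet_scale ssum_rot)
lemma G_uC: assumes "(cmod a)^2 + (cmod b)^2 = 1" shows "G (uC a b psi) = G psi"
  using w1_complex[OF assms] assms
  unfolding G_def K_AB_uC K_AC_uC K_BC_uC by (simp add: ssum_scale ddet_scale ssum_rot ddet_rot)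

lemma quad_root: fixes A B C :: complex
  shows "\<exists>a b. (cmod a)^2 + (cmod b)^2 = 1 \<and> A * a^2 + B * a * b + C * b^2 = 0"
proof (cases "A = 0")
  case True
  then show ?thesis by (intro exI[of _ 1] exI[of _ 0], simp)
next
  case False
  define r where "r = (- B + csqrt (B^2 - 4 * A * C)) / (2 * A)"
  have rr: "A * r^2 + B * r + C = 0"
  proof -
    have e1: "2 * A * r + B = csqrt (B^2 - 4 * A * C)"
      unfolding r_def using False by (simp add: field_simps)
    have "4 * A * (A * r^2 + B * r + C) = (2 * A * r + B)^2 - (B^2 - 4 * A * C)"
      by (simp add: algebra_simps power2_eq_square)
    also have "\<dots> = 0" unfolding e1 power2_csqrt by simp
    finally show ?thesis using False by simp
  qed
  define n where "n = sqrt ((cmod r)^2 + 1)"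
  have "0 \<le> (cmod r)^2" by simp
  then have "0 < (cmod r)^2 + 1" by linarith
  then have n0: "n > 0" unfolding n_def by simp
  have nn: "n^2 = (cmod r)^2 + 1" unfolding n_def using \<open>0 < (cmod r)^2 + 1\<close> by simp
  show ?thesis
  proof (intro exI conjI)
    have "(cmod (r / complex_of_real n))^2 + (cmod (1 / complex_of_real n))^2 = ((cmod r)^2 + 1) / n^2"
      using n0 by (simp add: norm_divide power_divide add_divide_distrib)
    then show "(cmod (r / complex_of_real n))^2 + (cmod (1 / complex_of_real n))^2 = 1"
      using n0 nn \<open>0 < (cmod r)^2 + 1\<close> by simp
    show "A * (r / complex_of_real n)^2 + B * (r / complex_of_real n) * (1 / complex_of_real n)
          + C * (1 / complex_of_real n)^2 = 0"
    proof -
      have "A * (r / complex_of_real n)^2 + B * (r / complex_of_real n) * (1 / complex_of_real n)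
          + C * (1 / complex_of_real n)^2 = (A * r^2 + B * r + C) / (complex_of_real n)^2"
        using n0 by (simp add: field_simps power2_eq_square)
      then show ?thesis using rr by simp
    qed
  qed
qed

lemma col_null: fixes p00 p01 p10 p11 :: complex
  assumes det: "p00 * p11 - p01 * p10 = 0"
  shows "\<exists>a b. (cmod a)^2 + (cmod b)^2 = 1 \<and> - cnj b * p00 + cnj a * p10 = 0 \<and> - cnj b * p01 + cnj a * p11 = 0"
proof (cases "p00 = 0 \<and> p10 = 0")
  case False
  define n where "n = sqrt ((cmod p00)^2 + (cmod p10)^2)"
  have "(cmod p00)^2 + (cmod p10)^2 > 0" using False by (auto simp: add_pos_nonneg add_nonneg_pos)
  then have n0: "n > 0" and nn: "n^2 = (cmod p00)^2 + (cmod p10)^2" unfolding n_def by auto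
  show ?thesis
  proof (intro exI conjI)
    have "(cmod (cnj p00 / complex_of_real n))^2 + (cmod (cnj p10 / complex_of_real n))^2
       = ((cmod p00)^2 + (cmod p10)^2) / n^2"
      using n0 by (simp add: norm_divide power_divide add_divide_distrib)
    then show "(cmod (cnj p00 / complex_of_real n))^2 + (cmod (cnj p10 / complex_of_real n))^2 = 1"
      using n0 nn False by simp
    show "- cnj (cnj p10 / complex_of_real n) * p00 + cnj (cnj p00 / complex_of_real n) * p10 = 0"
      by (simp add: field_simps)
    show "- cnj (cnj p10 / complex_of_real n) * p01 + cnj (cnj p00 / complex_of_real n) * p11 = 0"
      using det n0 by (simp add: field_simps)
  qed
next
  case T: True
  show ?thesis
  proof (cases "p01 = 0 \<and> p11 = 0")
    case True
    then show ?thesis using T by (intro exI[of _ 1] exI[of _ 0], simp)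
  next
    case False
    define n where "n = sqrt ((cmod p01)^2 + (cmod p11)^2)"
    have "(cmod p01)^2 + (cmod p11)^2 > 0" using False by (auto simp: add_pos_nonneg add_nonneg_pos)
    then have n0: "n > 0" and nn: "n^2 = (cmod p01)^2 + (cmod p11)^2" unfolding n_def by auto
    show ?thesis
    proof (intro exI conjI)
      have "(cmod (cnj p01 / complex_of_real n))^2 + (cmod (cnj p11 / complex_of_real n))^2
         = ((cmod p01)^2 + (cmod p11)^2) / n^2"
        using n0 by (simp add: norm_divide power_divide add_divide_distrib)
      then show "(cmod (cnj p01 / complex_of_real n))^2 + (cmod (cnj p11 / complex_of_real n))^2 = 1"
        using n0 nn False by simp
      show "- cnj (cnj p11 / complex_of_real n) * p00 + cnj (cnj p01 / complex_of_real n) * p10 = 0"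
        using T by simp
      show "- cnj (cnj p11 / complex_of_real n) * p01 + cnj (cnj p01 / complex_of_real n) * p11 = 0"
        by (simp add: field_simps)
    qed
  qed
qed

lemma reduction:
  "\<exists>phi. Nn phi = Nn psi \<and> G phi = G psi \<and> phi 0 0 1 = 0 \<and> phi 0 1 0 = 0 \<and> phi 0 1 1 = 0"
proof -
  obtain a1 b1 where ab1: "(cmod a1)^2 + (cmod b1)^2 = 1"
    and q1: "(psi 0 0 0 * psi 0 1 1 - psi 0 0 1 * psi 0 1 0) * a1^2
       + (psi 0 0 0 * psi 1 1 1 + psi 1 0 0 * psi 0 1 1 - psi 0 0 1 * psi 1 1 0 - psi 1 0 1 * psi 0 1 0) * a1 * b1
       + (psi 1 0 0 * psi 1 1 1 - psi 1 0 1 * psi 1 1 0) * b1^2 = 0"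
    using quad_root by blast
  define psi1 where "psi1 = uA a1 b1 psi"
  have d1: "psi1 0 0 0 * psi1 0 1 1 - psi1 0 0 1 * psi1 0 1 0 = 0"
    using q1 unfolding psi1_def uA_def sum2 Uf_def by (simp add: algebra_simps power2_eq_square)
  obtain a2 b2 where ab2: "(cmod a2)^2 + (cmod b2)^2 = 1"
    and c2: "- cnj b2 * psi1 0 0 0 + cnj a2 * psi1 0 1 0 = 0" "- cnj b2 * psi1 0 0 1 + cnj a2 * psi1 0 1 1 = 0"
    using col_null[OF d1] by blast
  define psi2 where "psi2 = uB a2 b2 psi1"
  have z2: "psi2 0 1 0 = 0" "psi2 0 1 1 = 0"
    using c2 unfolding psi2_def uB_def sum2 Uf_def by simp_all
  have d3: "psi2 0 0 0 * 0 - 0 * psi2 0 0 1 = 0" by simp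
  obtain a3 b3 where ab3: "(cmod a3)^2 + (cmod b3)^2 = 1"
    and c3: "- cnj b3 * psi2 0 0 0 + cnj a3 * psi2 0 0 1 = 0"
    using col_null[OF d3] by blast
  define psi3 where "psi3 = uC a3 b3 psi2"
  have z3: "psi3 0 0 1 = 0" "psi3 0 1 0 = 0" "psi3 0 1 1 = 0"
    using c3 z2 unfolding psi3_def uC_def sum2 Uf_def by simp_all
  have "Nn psi3 = Nn psi" unfolding psi3_def psi2_def psi1_def
    using ab1 ab2 ab3 by (simp add: Nn_uA Nn_uB Nn_uC)
  moreover have "G psi3 = G psi" unfolding psi3_def psi2_def psi1_def
    using ab1 ab2 ab3 by (simp add: G_uA G_uB G_uC)
  ultimately show ?thesis using z3 by blast
qed

lemma reduced_ineq:
  assumes z: "psi 0 0 1 = 0" "psi 0 1 0 = 0" "psi 0 1 1 = 0"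
  shows "3 * G psi \<le> 4 * (Nn psi)^2"
proof -
  define l where "l = psi 0 0 0"
  define q00 where "q00 = psi 1 0 0"
  define q01 where "q01 = psi 1 0 1"
  define q10 where "q10 = psi 1 1 0"
  define q11 where "q11 = psi 1 1 1"
  define dq where "dq = q00 * q11 - q01 * q10"
  have KAB: "KM (MAB psi) 0 0 = -2 * l * q10" "KM (MAB psi) 0 1 = - l * q11"
     "KM (MAB psi) 1 0 = - l * q11" "KM (MAB psi) 1 1 = 0"
    unfolding KM_def MAB_def sum4 yv_def l_def q10_def q11_def using z by simp_all
  have KAC: "KM (MAC psi) 0 0 = -2 * l * q01" "KM (MAC psi) 0 1 = - l * q11"
     "KM (MAC psi) 1 0 = - l * q11" "KM (MAC psi) 1 1 = 0"
    unfolding KM_def MAC_def sum4 yv_def l_def q01_def q11_def using z by simp_all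
  have KBC: "KM (MBC psi) 0 0 = 0" "KM (MBC psi) 0 1 = - l * q11"
     "KM (MBC psi) 1 0 = - l * q11" "KM (MBC psi) 1 1 = (-2) * dq"
    unfolding KM_def MBC_def sum4 yv_def l_def q00_def q01_def q10_def q11_def dq_def using z
    by (simp_all add: algebra_simps)
  define A where "A = (cmod l)^2"
  define X where "X = cmod dq"
  have GG: "G psi = 4 * A * ((cmod q01)^2 + (cmod q10)^2) + 4 * X^2"
    unfolding G_def ssum_def ddet_def sum2 KAB KAC KBC A_def X_def
    apply (simp add: norm_mult power_mult_distrib)
    by (Groebner_Basis.algebra)
  have NN: "Nn psi = A + (cmod q00)^2 + (cmod q01)^2 + (cmod q10)^2 + (cmod q11)^2"
    unfolding Nn_def sum2 A_def l_def q00_def q01_def q10_def q11_def using z by simp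
  have X0: "0 \<le> X" unfolding X_def by simp
  have Xle: "X \<le> cmod q00 * cmod q11 + cmod q01 * cmod q10"
    unfolding X_def dq_def by (metis norm_mult norm_triangle_ineq4)
  have A0: "0 \<le> A" unfolding A_def by simp
  define f where "f = (cmod q00)^2 + (cmod q11)^2"
  define g where "g = (cmod q01)^2 + (cmod q10)^2"
  have f0: "0 \<le> f" and g0: "0 \<le> g" unfolding f_def g_def by simp_all
  have h1: "cmod q00 * cmod q11 \<le> f / 2" unfolding f_def
    using sum_squares_bound[of "cmod q00" "cmod q11"] by (simp add: power2_eq_square field_simps)
  have h2: "cmod q01 * cmod q10 \<le> g / 2" unfolding g_def
    using sum_squares_bound[of "cmod q01" "cmod q10"] by (simp add: power2_eq_square field_simps)
  have X2: "X^2 \<le> ((f + g) / 2)^2"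
    by (rule power_mono, insert Xle h1 h2 X0, auto)
  have "3 * G psi \<le> 12 * A * g + 3 * (f + g)^2"
    using X2 unfolding GG g_def by (simp add: power_divide)
  also have "\<dots> \<le> 4 * (A + f + g)^2"
  proof -
    have "0 \<le> (2 * A - (f + g))^2" by simp
    moreover have "A * g \<le> A * (f + g)" using A0 f0 by (simp add: mult_left_mono)
    ultimately show ?thesis by (simp add: power2_eq_square algebra_simps)
  qed
  also have "\<dots> = 4 * (Nn psi)^2" unfolding NN f_def g_def by (simp add: algebra_simps)
  finally show ?thesis .
qed

lemma G_bound: "3 * G psi \<le> 4 * (Nn psi)^2"
  using reduction[of psi] reduced_ineq by metis



lemma mtrace_mult4: "mtrace (mat 4 4 f * mat 4 4 g) = (\<Sum>i<4. \<Sum>k<4. f (i,k) * g (k,i))"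
  unfolding mtrace_def mult_mat4 by simp

lemma kron2_mat: "kron2 P Q = mat 4 4 (\<lambda>(i,j). P $$ (i div 2, j div 2) * Q $$ (i mod 2, j mod 2))"
  unfolding kron2_def ..

lemma sum13: "(\<Sum>k\<in>{1..3::nat}. f k) = f 1 + f 2 + f 3"
  by (simp add: numeral_eq_Suc atLeastAtMostSuc_conv ac_simps)

lemma pauli_e:
  "pauli 1 $$ (0,0) = 0" "pauli 1 $$ (0,1) = 1" "pauli 1 $$ (1,0) = 1" "pauli 1 $$ (1,1) = 0"
  "pauli 2 $$ (0,0) = 0" "pauli 2 $$ (0,1) = -\<i>" "pauli 2 $$ (1,0) = \<i>" "pauli 2 $$ (1,1) = 0"
  "pauli 3 $$ (0,0) = 1" "pauli 3 $$ (0,1) = 0" "pauli 3 $$ (1,0) = 0" "pauli 3 $$ (1,1) = -1"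
  by (simp_all add: pauli_def mat_of_rows_list_def)

lemma pauli_e2:
  "pauli (Suc 0) $$ (0,0) = 0" "pauli (Suc 0) $$ (0,Suc 0) = 1" "pauli (Suc 0) $$ (Suc 0,0) = 1" "pauli (Suc 0) $$ (Suc 0,Suc 0) = 0"
  "pauli 2 $$ (0,0) = 0" "pauli 2 $$ (0,Suc 0) = -\<i>" "pauli 2 $$ (Suc 0,0) = \<i>" "pauli 2 $$ (Suc 0,Suc 0) = 0"
  "pauli 3 $$ (0,0) = 1" "pauli 3 $$ (0,Suc 0) = 0" "pauli 3 $$ (Suc 0,0) = 0" "pauli 3 $$ (Suc 0,Suc 0) = -1"
  by (simp_all add: pauli_def mat_of_rows_list_def)

lemma S_AB_explicit: "S_val (rho_AB psi) = (Nn psi)^2 + 2 * sK (MAB psi) - sK (MAC psi) - sK (MBC psi)"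
  unfolding S_val_def corr_def sum13 rho_AB_def kron2_mat mtrace_mult4 sK_def Nn_def KM_def MAB_def MAC_def MBC_def
  apply (simp add: sum2 sum4 pauli_e pauli_e2 yv_def cmod_power2 One_nat_def)
  by (Groebner_Basis.algebra)

lemma S_AC_explicit: "S_val (rho_AC psi) = (Nn psi)^2 + 2 * sK (MAC psi) - sK (MAB psi) - sK (MBC psi)"
  unfolding S_val_def corr_def sum13 rho_AC_def kron2_mat mtrace_mult4 sK_def Nn_def KM_def MAB_def MAC_def MBC_def
  apply (simp add: sum2 sum4 pauli_e pauli_e2 yv_def cmod_power2 One_nat_def)
  by (Groebner_Basis.algebra)

lemma S_BC_explicit: "S_val (rho_BC psi) = (Nn psi)^2 + 2 * sK (MBC psi) - sK (MAB psi) - sK (MAC psi)"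
  unfolding S_val_def corr_def sum13 rho_BC_def kron2_mat mtrace_mult4 sK_def Nn_def KM_def MAB_def MAC_def MBC_def
  apply (simp add: sum2 sum4 pauli_e pauli_e2 yv_def cmod_power2 One_nat_def)
  by (Groebner_Basis.algebra)


lemma proots_X: "proots [:0, 1::complex:] = {#0#}"
  using proots_linear_factor[of "0::complex"] by simp

lemma proots4: fixes a b :: complex
  shows "proots ([:0,1:] * [:0,1:] * [:- a, 1:] * [:- b, 1:]) = {#0#} + {#0#} + {#a#} + {#b#}"
proof -
  have nz: "[:0,1::complex:] \<noteq> 0" "[:- a, 1:] \<noteq> 0" "[:- b, 1:] \<noteq> 0" by auto
  have "proots ([:0,1:] * [:0,1:] * [:- a, 1:] * [:- b, 1:]) =
        proots ([:0,1:] * [:0,1:] * [:- a, 1:]) + proots [:- b, 1:]"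
    by (rule proots_mult, insert nz, auto)
  also have "proots ([:0,1:] * [:0,1:] * [:- a, 1:]) = proots ([:0,1:] * [:0,1:]) + proots [:- a, 1:]"
    by (rule proots_mult, insert nz, auto)
  also have "proots ([:0,1::complex:] * [:0,1:]) = proots [:0,1:] + proots [:0,1:]"
    by (rule proots_mult, insert nz, auto)
  finally show ?thesis using proots_linear_factor[of "- a"] proots_linear_factor[of "- b"]
    by (simp only: proots_X minus_minus)
qed


lemma conc_from_poly:
  fixes s q :: real
  assumes hp: "\<And>z. poly (char_poly (wootters_R \<rho>)) z = z^2 * (z^2 - complex_of_real s * z + complex_of_real (q^2))"
    and q0: "0 \<le> q" and sq: "2 * q \<le> s"
  shows "(concurrence \<rho>)^2 = s - 2 * q"
proof -
  define d where "d = sqrt (s^2 - 4 * q^2)"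
  have "(2*q)^2 \<le> s^2" by (rule power_mono, insert q0 sq, auto)
  then have h4: "0 \<le> s^2 - 4 * q^2" by (simp add: power2_eq_square)
  have d0: "0 \<le> d" unfolding d_def using h4 by simp
  have dd: "d^2 = s^2 - 4 * q^2" unfolding d_def using h4 by simp
  have ds: "d \<le> s"
  proof -
    have "0 \<le> q^2" by simp
    then have a: "d^2 \<le> s^2" using dd by linarith
    have b: "0 \<le> s" using q0 sq by linarith
    show ?thesis by (rule power2_le_imp_le[OF a b])
  qed
  define m1 where "m1 = (s + d) / 2"
  define m2 where "m2 = (s - d) / 2"
  have m2a: "0 \<le> m2" unfolding m1_def m2_def using ds d0 by (simp add: field_simps)
  have m2b: "m2 \<le> m1" unfolding m1_def m2_def using ds d0 by (simp add: field_simps)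
  note m2 = m2a m2b
  have msum: "m1 + m2 = s" unfolding m1_def m2_def by (simp add: field_simps)
  have mprod: "m1 * m2 = q^2"
  proof -
    have "m1 * m2 = (s^2 - d^2) / 4" unfolding m1_def m2_def by (simp add: field_simps power2_eq_square)
    then show ?thesis using dd by simp
  qed
  have cs: "complex_of_real s = complex_of_real m1 + complex_of_real m2" by (simp only: msum[symmetric] of_real_add)
  have cq: "complex_of_real (q^2) = complex_of_real m1 * complex_of_real m2" by (simp only: mprod[symmetric] of_real_mult)
  let ?p = "[:0,1:] * [:0,1:] * [:- complex_of_real m1, 1:] * [:- complex_of_real m2, 1:]"
  have "poly (char_poly (wootters_R \<rho>)) = poly ?p"
  proof
    fix z
    have e: "poly ?p z = z * z * (z - complex_of_real m1) * (z - complex_of_real m2)" by (simp add: algebra_simps)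
    show "poly (char_poly (wootters_R \<rho>)) z = poly ?p z"
      unfolding hp cs cq e by (Groebner_Basis.algebra)
  qed
  then have cp: "char_poly (wootters_R \<rho>) = ?p" by (simp only: poly_eq_poly_eq_iff)
  have pr: "proots (char_poly (wootters_R \<rho>)) = {#0#} + {#0#} + {#complex_of_real m1#} + {#complex_of_real m2#}"
    unfolding cp by (rule proots4)
  have im: "image_mset (\<lambda>z. sqrt (Re z)) (proots (char_poly (wootters_R \<rho>))) = mset [0, 0, sqrt m2, sqrt m1]"
  proof -
    have "image_mset (\<lambda>z. sqrt (Re z)) ({#0#} + {#0#} + {#complex_of_real m1#} + {#complex_of_real m2#})
       = {#0#} + {#0#} + {#sqrt m1#} + {#sqrt m2#}" by simp
    also have "\<dots> = mset [0, 0, sqrt m2, sqrt m1]" by (simp add: add_mset_commute)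
    finally show ?thesis unfolding pr .
  qed
  have so: "sorted [0, 0, sqrt m2, sqrt m1]" using m2 by (simp add: real_sqrt_le_mono)
  have "wootters_lambdas \<rho> = [sqrt m1, sqrt m2, 0, 0]"
    unfolding wootters_lambdas_def im sorted_list_of_multiset_mset sorted_sort_id[OF so] by simp
  then have c: "concurrence \<rho> = sqrt m1 - sqrt m2"
    unfolding concurrence_def Let_def using m2 by (simp add: real_sqrt_le_mono)
  have "(concurrence \<rho>)^2 = (sqrt m1)^2 + (sqrt m2)^2 - 2 * (sqrt m1 * sqrt m2)"
    unfolding c power2_diff by (simp only: mult.assoc)
  also have "(sqrt m1)^2 = m1" using m2 by simp
  also have "(sqrt m2)^2 = m2" using m2 by simp
  also have "sqrt m1 * sqrt m2 = q"
  proof -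
    have "sqrt m1 * sqrt m2 = sqrt (m1 * m2)" by (rule real_sqrt_mult[symmetric])
    also have "\<dots> = sqrt (q^2)" using mprod by simp
    also have "\<dots> = q" using q0 by simp
    finally show ?thesis .
  qed
  finally show ?thesis using msum by simp
qed


lemma rho_AB_M: "rho_AB psi = rhoM (MAB psi)"
  unfolding rho_AB_def rhoM_def MAB_def ..
lemma rho_AC_M: "rho_AC psi = rhoM (MAC psi)"
  unfolding rho_AC_def rhoM_def MAC_def ..
lemma rho_BC_M: "rho_BC psi = rhoM (MBC psi)"
  unfolding rho_BC_def rhoM_def MBC_def ..

lemma sK_ssum: "sK M = ssum (KM M)"
  unfolding sK_def ssum_def ..
lemma dK_ddet: "dK M = ddet (KM M)"
  unfolding dK_def ddet_def ..

lemma ssum_ddet: "2 * cmod (ddet K) \<le> ssum K"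
proof -
  have t: "cmod (ddet K) \<le> cmod (K 0 0) * cmod (K 1 1) + cmod (K 0 1) * cmod (K 1 0)"
    unfolding ddet_def by (metis norm_mult norm_triangle_ineq4)
  have b1: "2 * (cmod (K 0 0) * cmod (K 1 1)) \<le> (cmod (K 0 0))^2 + (cmod (K 1 1))^2"
    using sum_squares_bound[of "cmod (K 0 0)" "cmod (K 1 1)"] by (simp add: mult.assoc)
  have b2: "2 * (cmod (K 0 1) * cmod (K 1 0)) \<le> (cmod (K 0 1))^2 + (cmod (K 1 0))^2"
    using sum_squares_bound[of "cmod (K 0 1)" "cmod (K 1 0)"] by (simp add: mult.assoc)
  have s: "ssum K = (cmod (K 0 0))^2 + (cmod (K 0 1))^2 + (cmod (K 1 0))^2 + (cmod (K 1 1))^2"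
    unfolding ssum_def sum2 by simp
  show ?thesis using t b1 b2 s by linarith
qed

lemma conc_sq: "(concurrence (rhoM M))^2 = ssum (KM M) - 2 * cmod (ddet (KM M))"
proof -
  have "(concurrence (rhoM M))^2 = sK M - 2 * cmod (dK M)"
  proof (rule conc_from_poly)
    fix z show "poly (char_poly (wootters_R (rhoM M))) z =
      z^2 * (z^2 - complex_of_real (sK M) * z + complex_of_real ((cmod (dK M))^2))"
      by (rule charpoly_rhoM)
    show "0 \<le> cmod (dK M)" by simp
    show "2 * cmod (dK M) \<le> sK M" unfolding sK_ssum dK_ddet by (rule ssum_ddet)
  qed
  then show ?thesis unfolding sK_ssum dK_ddet .
qed

lemma ddet_AC: "ddet (KM (MAC psi)) = ddet (KM (MAB psi))"
  unfolding ddet_def KM_def MAC_def MAB_def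
  apply (simp add: sum4 yv_def One_nat_def)
  by (Groebner_Basis.algebra)

lemma ddet_BC: "ddet (KM (MBC psi)) = ddet (KM (MAB psi))"
  unfolding ddet_def KM_def MBC_def MAB_def
  apply (simp add: sum4 yv_def One_nat_def)
  by (Groebner_Basis.algebra)

theorem corollary5:
  fixes psi :: "nat \<Rightarrow> nat \<Rightarrow> nat \<Rightarrow> complex"
  assumes "normalized3 psi"
  shows "((concurrence (rho_AB psi))^2 > 4/9 \<and> (concurrence (rho_AC psi))^2 > 4/9
           \<longrightarrow> S_val (rho_AB psi) > 1 \<and> S_val (rho_AC psi) > 1)
       \<and> ((concurrence (rho_AB psi))^2 > 4/9 \<and> (concurrence (rho_BC psi))^2 > 4/9
           \<longrightarrow> S_val (rho_AB psi) > 1 \<and> S_val (rho_BC psi) > 1)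
       \<and> ((concurrence (rho_AC psi))^2 > 4/9 \<and> (concurrence (rho_BC psi))^2 > 4/9
           \<longrightarrow> S_val (rho_AC psi) > 1 \<and> S_val (rho_BC psi) > 1)"
  proof -
  have N: "Nn psi = 1" using assms unfolding normalized3_def Nn_def .
  define sab where "sab = ssum (KM (MAB psi))"
  define sac where "sac = ssum (KM (MAC psi))"
  define sbc where "sbc = ssum (KM (MBC psi))"
  define q where "q = cmod (ddet (KM (MAB psi)))"
  have cab: "(concurrence (rho_AB psi))^2 = sab - 2 * q"
    unfolding rho_AB_M conc_sq sab_def q_def ..
  have cac: "(concurrence (rho_AC psi))^2 = sac - 2 * q"
    unfolding rho_AC_M conc_sq sac_def q_def ddet_AC ..
  have cbc: "(concurrence (rho_BC psi))^2 = sbc - 2 * q"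
    unfolding rho_BC_M conc_sq sbc_def q_def ddet_BC ..
  have Sab: "S_val (rho_AB psi) = 1 + 2 * sab - sac - sbc"
    unfolding S_AB_explicit N sK_ssum sab_def sac_def sbc_def by simp
  have Sac: "S_val (rho_AC psi) = 1 + 2 * sac - sab - sbc"
    unfolding S_AC_explicit N sK_ssum sab_def sac_def sbc_def by simp
  have Sbc: "S_val (rho_BC psi) = 1 + 2 * sbc - sab - sac"
    unfolding S_BC_explicit N sK_ssum sab_def sac_def sbc_def by simp
  have Gb: "3 * (sab + sac + sbc - 6 * q) \<le> 4"
    using G_bound[of psi] unfolding G_def N sab_def sac_def sbc_def q_def by simp
  have Gb': "3 * sab + 3 * sac + 3 * sbc - 18 * q \<le> 4" using Gb by (simp add: algebra_simps)
  show ?thesis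
    unfolding cab cac cbc Sab Sac Sbc
    apply (intro conjI impI)
    apply (insert Gb')
    apply (elim conjE; linarith)+
    done
qed

end
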